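(* Suppose that for every connected graph $G$, the number of pairwise non-isomorphic connected graphs equimorphic to $G$ is either $1$ or infinite. Then for every graph $G$, the number of pairwise non-isomorphic graphs equimorphic to $G$ is either $1$ or infinite.
   Context: Graphs are undirected and loopless. $G$ embeds into $G'$ if $G$ is isomorphic to an induced subgraph of $G'$; $G,G'$ are equimorphic if each embeds into the other. *)

theory Defs
  imports Main
begin

type_synonym 'a graph = "'a set \<times> ('a \<Rightarrow> 'a \<Rightarrow> bool)"

definition verts :: "'a graph \<Rightarrow> 'a set" where "verts G = fst G"
definition adj :: "'a graph \<Rightarrow> 'a \<Rightarrow> 'a \<Rightarrow> bool" where "adj G = snd G"

definition is_graph :: "'a graph \<Rightarrow> bool" where
  "is_graph G \<longleftrightarrow>
     (\<forall>x y. adj G x y \<longrightarrow> x \<in> verts G \<and> y \<in> verts G) \<and>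
     (\<forall>x y. adj G x y \<longrightarrow> adj G y x) \<and>
     (\<forall>x. \<not> adj G x x)"

text \<open>G embeds into H: G is isomorphic to an induced subgraph of H.\<close>
definition embeds :: "'a graph \<Rightarrow> 'b graph \<Rightarrow> bool" where
  "embeds G H \<longleftrightarrow> (\<exists>f. inj_on f (verts G) \<and> f ` verts G \<subseteq> verts H \<and>
     (\<forall>x\<in>verts G. \<forall>y\<in>verts G. adj G x y \<longleftrightarrow> adj H (f x) (f y)))"

definition equimorphic :: "'a graph \<Rightarrow> 'b graph \<Rightarrow> bool" where
  "equimorphic G H \<longleftrightarrow> embeds G H \<and> embeds H G"

definition isomorphic :: "'a graph \<Rightarrow> 'b graph \<Rightarrow> bool" where
  "isomorphic G H \<longleftrightarrow> (\<exists>f. bij_betw f (verts G) (verts H) \<and>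
     (\<forall>x\<in>verts G. \<forall>y\<in>verts G. adj G x y \<longleftrightarrow> adj H (f x) (f y)))"

definition connected_graph :: "'a graph \<Rightarrow> bool" where
  "connected_graph G \<longleftrightarrow> verts G \<noteq> {} \<and>
     (\<forall>x\<in>verts G. \<forall>y\<in>verts G. (adj G)\<^sup>*\<^sup>* x y)"

definition iso_classes :: "('a graph \<Rightarrow> bool) \<Rightarrow> 'a graph set set" where
  "iso_classes P = {H. is_graph H \<and> P H} // {(H, H'). isomorphic H H'}"

definition one_or_infinite :: "'a graph set set \<Rightarrow> bool" where
  "one_or_infinite C \<longleftrightarrow> card C = 1 \<or> infinite C"

end

theory Submission
  imports Defs
begin


lemma verts_pair[simp]: "verts (V, E) = V" by (simp add: verts_def)
lemma adj_pair[simp]: "adj (V, E) = E" by (simp add: adj_def)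

lemma graph_adjD:
  assumes "is_graph G" "adj G x y"
  shows "x \<in> verts G" "y \<in> verts G" "adj G y x" "x \<noteq> y"
  using assms unfolding is_graph_def by metis+

lemma iso_refl: "isomorphic G G"
  unfolding isomorphic_def by (rule exI[of _ id]) auto

lemma iso_sym: assumes "isomorphic G H" shows "isomorphic H G"
proof -
  obtain f where f: "bij_betw f (verts G) (verts H)"
    "\<forall>x\<in>verts G. \<forall>y\<in>verts G. adj G x y \<longleftrightarrow> adj H (f x) (f y)"
    using assms unfolding isomorphic_def by blast
  let ?g = "inv_into (verts G) f"
  have b: "bij_betw ?g (verts H) (verts G)" using f(1) by (rule bij_betw_inv_into)
  have "\<forall>x\<in>verts H. \<forall>y\<in>verts H. adj H x y \<longleftrightarrow> adj G (?g x) (?g y)"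
  proof (intro ballI)
    fix x y assume "x \<in> verts H" "y \<in> verts H"
    then have "?g x \<in> verts G" "?g y \<in> verts G" "f (?g x) = x" "f (?g y) = y"
      using b f(1) by (auto simp: bij_betw_def f_inv_into_f)
    then show "adj H x y \<longleftrightarrow> adj G (?g x) (?g y)" using f(2) by metis
  qed
  then show ?thesis using b unfolding isomorphic_def by blast
qed

lemma iso_trans: assumes "isomorphic G H" "isomorphic H K" shows "isomorphic G K"
proof -
  obtain f where f: "bij_betw f (verts G) (verts H)"
    "\<forall>x\<in>verts G. \<forall>y\<in>verts G. adj G x y \<longleftrightarrow> adj H (f x) (f y)"
    using assms(1) unfolding isomorphic_def by blast
  obtain g where g: "bij_betw g (verts H) (verts K)"
    "\<forall>x\<in>verts H. \<forall>y\<in>verts H. adj H x y \<longleftrightarrow> adj K (g x) (g y)"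
    using assms(2) unfolding isomorphic_def by blast
  have "bij_betw (g \<circ> f) (verts G) (verts K)" using f(1) g(1) by (rule bij_betw_trans)
  moreover have "\<forall>x\<in>verts G. \<forall>y\<in>verts G. adj G x y \<longleftrightarrow> adj K ((g \<circ> f) x) ((g \<circ> f) y)"
  proof (intro ballI)
    fix x y assume "x \<in> verts G" "y \<in> verts G"
    moreover have "f x \<in> verts H" "f y \<in> verts H" using calculation f(1) bij_betwE by blast+
    ultimately show "adj G x y \<longleftrightarrow> adj K ((g \<circ> f) x) ((g \<circ> f) y)" using f(2) g(2) by simp
  qed
  ultimately show ?thesis unfolding isomorphic_def by blast
qed

lemma embeds_refl: "embeds G G"
  unfolding embeds_def by (rule exI[of _ id]) auto

lemma embeds_trans: assumes "embeds G H" "embeds H K" shows "embeds G K"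
proof -
  obtain f where f: "inj_on f (verts G)" "f ` verts G \<subseteq> verts H"
    "\<forall>x\<in>verts G. \<forall>y\<in>verts G. adj G x y \<longleftrightarrow> adj H (f x) (f y)"
    using assms(1) unfolding embeds_def by blast
  obtain g where g: "inj_on g (verts H)" "g ` verts H \<subseteq> verts K"
    "\<forall>x\<in>verts H. \<forall>y\<in>verts H. adj H x y \<longleftrightarrow> adj K (g x) (g y)"
    using assms(2) unfolding embeds_def by blast
  have "inj_on (g \<circ> f) (verts G)" using f g by (simp add: comp_inj_on inj_on_subset)
  moreover have "(g \<circ> f) ` verts G \<subseteq> verts K" using f g by (auto simp: image_subset_iff)
  moreover have "\<forall>x\<in>verts G. \<forall>y\<in>verts G. adj G x y \<longleftrightarrow> adj K ((g \<circ> f) x) ((g \<circ> f) y)"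
  proof (intro ballI)
    fix x y assume "x \<in> verts G" "y \<in> verts G"
    moreover have "f x \<in> verts H" "f y \<in> verts H" using calculation f(2) by auto
    ultimately show "adj G x y \<longleftrightarrow> adj K ((g \<circ> f) x) ((g \<circ> f) y)" using f(3) g(3) by simp
  qed
  ultimately show ?thesis unfolding embeds_def by blast
qed

lemma equi_trans: "equimorphic G H \<Longrightarrow> equimorphic H K \<Longrightarrow> equimorphic G K"
  unfolding equimorphic_def by (meson embeds_trans)

lemma equi_refl: "equimorphic G G"
  unfolding equimorphic_def using embeds_refl by blast

definition compl :: "'a graph \<Rightarrow> 'a graph" where
  "compl G = (verts G, \<lambda>x y. x \<in> verts G \<and> y \<in> verts G \<and> x \<noteq> y \<and> \<not> adj G x y)"

lemma verts_compl[simp]: "verts (compl G) = verts G" by (simp add: compl_def)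
lemma adj_compl[simp]: "adj (compl G) x y \<longleftrightarrow> x \<in> verts G \<and> y \<in> verts G \<and> x \<noteq> y \<and> \<not> adj G x y"
  by (simp add: compl_def)

lemma is_graph_compl: "is_graph G \<Longrightarrow> is_graph (compl G)"
  unfolding is_graph_def by auto

lemma compl_compl: assumes "is_graph G" shows "compl (compl G) = G"
proof -
  have "adj (compl (compl G)) = adj G"
  proof (intro ext)
    fix x y
    show "adj (compl (compl G)) x y = adj G x y"
      using graph_adjD[OF assms, of x y] graph_adjD[OF assms, of y x] by auto
  qed
  note h = this
  have "compl (compl G) = (verts (compl (compl G)), adj (compl (compl G)))" by (simp add: verts_def adj_def)
  also have "\<dots> = (verts G, adj G)" using h by simp
  also have "\<dots> = G" by (simp add: verts_def adj_def)
  finally show ?thesis .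
qed

lemma embeds_compl: assumes "embeds G H" shows "embeds (compl G) (compl H)"
proof -
  obtain f where f: "inj_on f (verts G)" "f ` verts G \<subseteq> verts H"
    "\<forall>x\<in>verts G. \<forall>y\<in>verts G. adj G x y \<longleftrightarrow> adj H (f x) (f y)"
    using assms unfolding embeds_def by blast
  have "\<forall>x\<in>verts G. \<forall>y\<in>verts G. adj (compl G) x y \<longleftrightarrow> adj (compl H) (f x) (f y)"
    using f by (auto simp: inj_on_def)
  then show ?thesis using f unfolding embeds_def by auto
qed

lemma iso_compl: assumes "isomorphic G H" shows "isomorphic (compl G) (compl H)"
proof -
  obtain f where f: "bij_betw f (verts G) (verts H)"
    "\<forall>x\<in>verts G. \<forall>y\<in>verts G. adj G x y \<longleftrightarrow> adj H (f x) (f y)"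
    using assms unfolding isomorphic_def by blast
  have "\<forall>x\<in>verts G. \<forall>y\<in>verts G. adj (compl G) x y \<longleftrightarrow> adj (compl H) (f x) (f y)"
    using f by (auto simp: bij_betw_def inj_on_def)
  then show ?thesis using f unfolding isomorphic_def by auto
qed

lemma equi_compl: "equimorphic G H \<Longrightarrow> equimorphic (compl G) (compl H)"
  unfolding equimorphic_def by (simp add: embeds_compl)

lemma connected_compl:
  assumes g: "is_graph G" and ne: "verts G \<noteq> {}" and nc: "\<not> connected_graph G"
  shows "connected_graph (compl G)"
proof -
  obtain a b where ab: "a \<in> verts G" "b \<in> verts G" "\<not> (adj G)\<^sup>*\<^sup>* a b"
    using ne nc unfolding connected_graph_def by blast
  have symr: "(adj G)\<^sup>*\<^sup>* x y \<Longrightarrow> (adj G)\<^sup>*\<^sup>* y x" for x y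
  proof (induction rule: rtranclp_induct)
    case base then show ?case by simp
  next
    case (step y z) then show ?case
      using graph_adjD(3)[OF g] by (meson converse_rtranclp_into_rtranclp)
  qed
  have nadj: "\<not> (adj G)\<^sup>*\<^sup>* x y \<Longrightarrow> x \<in> verts G \<Longrightarrow> y \<in> verts G \<Longrightarrow> adj (compl G) x y" for x y
    by auto
  have "(adj (compl G))\<^sup>*\<^sup>* x y" if x: "x \<in> verts G" and y: "y \<in> verts G" for x y
  proof (cases "(adj G)\<^sup>*\<^sup>* x y")
    case False then show ?thesis using nadj x y by blast
  next
    case True
    obtain z where z: "z \<in> verts G" "\<not> (adj G)\<^sup>*\<^sup>* x z"
    proof (cases "(adj G)\<^sup>*\<^sup>* x a")
      case True
      then have "\<not> (adj G)\<^sup>*\<^sup>* x b" using ab by (meson rtranclp_trans symr)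
      then show ?thesis using that ab by blast
    next
      case False then show ?thesis using that ab by blast
    qed
    have "\<not> (adj G)\<^sup>*\<^sup>* z y" using z True by (meson rtranclp_trans symr)
    then have "adj (compl G) x z" "adj (compl G) z y" using nadj x y z by auto
    then show ?thesis by (meson converse_rtranclp_into_rtranclp r_into_rtranclp)
  qed
  then show ?thesis using ne unfolding connected_graph_def by simp
qed



definition all_iso :: "'a graph \<Rightarrow> bool" where
  "all_iso G \<longleftrightarrow> (\<forall>H :: 'a graph. is_graph H \<and> equimorphic H G \<longrightarrow> isomorphic G H)"

definition fam :: "'a graph \<Rightarrow> bool" where
  "fam G \<longleftrightarrow> (\<exists>X :: nat \<Rightarrow> 'a graph. (\<forall>n. is_graph (X n) \<and> equimorphic (X n) G) \<and>
      (\<forall>n m. n \<noteq> m \<longrightarrow> \<not> isomorphic (X n) (X m)))"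

lemma all_isoD: "all_iso (G :: 'a graph) \<Longrightarrow> is_graph (H :: 'a graph) \<Longrightarrow> equimorphic H G \<Longrightarrow> isomorphic G H"
  unfolding all_iso_def by blast

lemma class_eq: "isomorphic a b \<Longrightarrow> {y. isomorphic a y} = {y. isomorphic b y}"
  by (meson iso_sym iso_trans)

lemma iso_classes_alt: "iso_classes P = (\<Union>x\<in>{H. is_graph H \<and> P H}. {{y. isomorphic x y}})"
  unfolding iso_classes_def quotient_def by auto

lemma final_all:
  fixes G :: "'a graph"
  assumes "is_graph G" "all_iso G"
  shows "one_or_infinite (iso_classes (\<lambda>H :: 'a graph. equimorphic H G))"
proof -
  let ?A = "{H :: 'a graph. is_graph H \<and> equimorphic H G}"
  have cl: "{y :: 'a graph. isomorphic x y} = {y :: 'a graph. isomorphic G y}" if "x \<in> ?A" for x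
  proof -
    have "isomorphic G x" using all_isoD[OF assms(2)] that by blast
    then show ?thesis by (rule class_eq[symmetric])
  qed
  have GA: "G \<in> ?A" using assms(1) equi_refl[of G] by simp
  have "iso_classes (\<lambda>H :: 'a graph. equimorphic H G) = (\<lambda>x. {y :: 'a graph. isomorphic x y}) ` ?A"
    unfolding iso_classes_alt by blast
  also have "\<dots> = (\<lambda>x. {y :: 'a graph. isomorphic G y}) ` ?A"
    by (rule image_cong) (simp_all add: cl)
  also have "\<dots> = {{y :: 'a graph. isomorphic G y}}" using GA by (rule image_constant)
  finally have "iso_classes (\<lambda>H :: 'a graph. equimorphic H G) = {{y :: 'a graph. isomorphic G y}}" .
  then show ?thesis unfolding one_or_infinite_def by simp
qed

lemma final_fam:
  fixes G :: "'a graph"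
  assumes "fam G"
  shows "one_or_infinite (iso_classes (\<lambda>H :: 'a graph. equimorphic H G))"
proof -
  obtain X :: "nat \<Rightarrow> 'a graph" where X: "\<And>n. is_graph (X n) \<and> equimorphic (X n) G"
    "\<And>n m. n \<noteq> m \<Longrightarrow> \<not> isomorphic (X n) (X m)"
    using assms unfolding fam_def by blast
  let ?c = "\<lambda>n. {y :: 'a graph. isomorphic (X n) y}"
  have "inj ?c"
  proof (rule injI)
    fix n m assume "?c n = ?c m"
    then have "isomorphic (X n) (X m)" using iso_refl[of "X m"] by (metis (mono_tags) mem_Collect_eq)
    then show "n = m" using X(2) by blast
  qed
  then have "infinite (range ?c)" using finite_imageD infinite_UNIV_nat by blast
  moreover have "range ?c \<subseteq> iso_classes (\<lambda>H :: 'a graph. equimorphic H G)"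
    unfolding iso_classes_alt using X(1) by blast
  ultimately show ?thesis unfolding one_or_infinite_def using finite_subset by blast
qed

lemma classes_inf_fam:
  assumes "infinite (iso_classes P)"
  shows "\<exists>X :: nat \<Rightarrow> 'a graph. (\<forall>n. is_graph (X n) \<and> P (X n)) \<and>
      (\<forall>n m. n \<noteq> m \<longrightarrow> \<not> isomorphic (X n) (X m))"
proof -
  obtain f :: "nat \<Rightarrow> 'a graph set" where f: "inj f" "range f \<subseteq> iso_classes P"
    using infinite_countable_subset[OF assms] by blast
  have "\<forall>n. \<exists>x. is_graph x \<and> P x \<and> f n = {y. isomorphic x y}"
    using f(2) unfolding iso_classes_alt by blast
  then obtain X where X: "\<And>n. is_graph (X n) \<and> P (X n) \<and> f n = {y. isomorphic (X n) y}"
    by metis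
  have "\<not> isomorphic (X n) (X m)" if "n \<noteq> m" for n m
  proof
    assume "isomorphic (X n) (X m)"
    then have "f n = f m" using X class_eq by metis
    then show False using f(1) that by (meson injD)
  qed
  then show ?thesis using X by blast
qed

lemma classes_one:
  assumes "card (iso_classes P) = 1" "is_graph G" "P G" "is_graph H" "P H"
  shows "isomorphic G H"
proof -
  obtain c where c: "iso_classes P = {c}" using assms(1) card_1_singletonE by blast
  have "{y. isomorphic G y} \<in> iso_classes P" "{y. isomorphic H y} \<in> iso_classes P"
    using assms(2-5) unfolding iso_classes_alt by blast+
  then have "{y. isomorphic G y} = c" "{y. isomorphic H y} = c" using c by simp_all
  then show ?thesis using iso_refl[of H] by blast
qed

lemma finite_case:
  fixes G :: "'a graph"
  assumes "is_graph G" "finite (verts G)"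
  shows "all_iso G"
  unfolding all_iso_def
proof (intro allI impI)
  fix H assume "is_graph H \<and> equimorphic H G"
  then have e1: "embeds G H" and e2: "embeds H G" unfolding equimorphic_def by simp_all
  obtain f where f: "inj_on f (verts G)" "f ` verts G \<subseteq> verts H"
    "\<forall>x\<in>verts G. \<forall>y\<in>verts G. adj G x y \<longleftrightarrow> adj H (f x) (f y)"
    using e1 unfolding embeds_def by blast
  obtain g where g: "inj_on g (verts H)" "g ` verts H \<subseteq> verts G"
    using e2 unfolding embeds_def by blast
  have fH: "finite (verts H)" using inj_on_finite[OF g(1) g(2) assms(2)] .
  have "card (verts H) \<le> card (verts G)" using card_inj_on_le[OF g(1) g(2) assms(2)] .
  also have "\<dots> = card (f ` verts G)" using f(1) by (simp add: card_image)
  finally have "f ` verts G = verts H" using card_seteq[OF fH f(2)] by blast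
  then have "bij_betw f (verts G) (verts H)" using f(1) by (simp add: bij_betw_def)
  then show "isomorphic G H" using f(3) unfolding isomorphic_def by blast
qed

lemma transfer_compl:
  fixes G :: "'a graph"
  assumes "is_graph G" "all_iso (compl G) \<or> fam (compl G)"
  shows "all_iso G \<or> fam G"
  using assms(2)
proof
  assume a: "all_iso (compl G)"
  have "isomorphic G H" if "is_graph H" "equimorphic H G" for H :: "'a graph"
  proof -
    have "is_graph (compl H)" using that(1) by (rule is_graph_compl)
    moreover have "equimorphic (compl H) (compl G)" using that(2) by (rule equi_compl)
    ultimately have "isomorphic (compl G) (compl H)"
      by (rule all_isoD[OF a])
    then have "isomorphic (compl (compl G)) (compl (compl H))" by (rule iso_compl)
    then show ?thesis by (simp only: compl_compl[OF assms(1)] compl_compl[OF that(1)])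
  qed
  then show ?thesis unfolding all_iso_def by blast
next
  assume "fam (compl G)"
  then obtain X :: "nat \<Rightarrow> 'a graph" where X: "\<And>n. is_graph (X n) \<and> equimorphic (X n) (compl G)"
    "\<And>n m. n \<noteq> m \<Longrightarrow> \<not> isomorphic (X n) (X m)"
    unfolding fam_def by blast
  have "is_graph (compl (X n)) \<and> equimorphic (compl (X n)) G" for n
  proof -
    have "equimorphic (compl (X n)) (compl (compl G))" using equi_compl[of "X n" "compl G"] X(1)[of n] by blast
    then have "equimorphic (compl (X n)) G" by (simp only: compl_compl[OF assms(1)])
    moreover have "is_graph (compl (X n))" using X(1)[of n] is_graph_compl by blast
    ultimately show ?thesis by blast
  qed
  moreover have "\<not> isomorphic (compl (X n)) (compl (X m))" if "n \<noteq> m" for n m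
  proof
    assume "isomorphic (compl (X n)) (compl (X m))"
    then have "isomorphic (compl (compl (X n))) (compl (compl (X m)))" by (rule iso_compl)
    then have "isomorphic (X n) (X m)"
      by (simp only: compl_compl[OF conjunct1[OF X(1)[of n]]] compl_compl[OF conjunct1[OF X(1)[of m]]])
    then show False using X(2) that by blast
  qed
  ultimately have "fam G" unfolding fam_def by (intro exI[of _ "\<lambda>n. compl (X n)"]) simp
  then show ?thesis by simp
qed



lemma graph_rtranclp_sym:
  assumes "is_graph G" "(adj G)\<^sup>*\<^sup>* x y" shows "(adj G)\<^sup>*\<^sup>* y x"
  using assms(2)
proof (induction rule: rtranclp_induct)
  case base then show ?case by simp
next
  case (step y z) then show ?case
    using graph_adjD(3)[OF assms(1)] by (meson converse_rtranclp_into_rtranclp)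
qed

definition isol :: "'a graph \<Rightarrow> 'a set \<Rightarrow> bool" where
  "isol X S \<longleftrightarrow> S \<subseteq> verts X \<and> (\<forall>x\<in>S. \<forall>y\<in>verts X. \<not> adj X x y)"

definition has_isol :: "'a graph \<Rightarrow> nat \<Rightarrow> bool" where
  "has_isol X n \<longleftrightarrow> (\<exists>S. finite S \<and> card S = n \<and> isol X S)"

lemma iso_has_isol:
  fixes X Y :: "'a graph"
  assumes "isomorphic X Y" "has_isol X n" shows "has_isol Y n"
proof -
  obtain f where f: "bij_betw f (verts X) (verts Y)"
    "\<forall>x\<in>verts X. \<forall>y\<in>verts X. adj X x y \<longleftrightarrow> adj Y (f x) (f y)"
    using assms(1) unfolding isomorphic_def by blast
  obtain S where S: "finite S" "card S = n" "isol X S" using assms(2) unfolding has_isol_def by blast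
  have inj: "inj_on f S" using f(1) S(3) unfolding isol_def bij_betw_def by (meson inj_on_subset)
  have "card (f ` S) = n" using card_image[OF inj] S(2) by simp
  moreover have "isol Y (f ` S)"
    unfolding isol_def
  proof (intro conjI ballI)
    show "f ` S \<subseteq> verts Y" using S(3) f(1) unfolding isol_def bij_betw_def by blast
  next
    fix x y assume x: "x \<in> f ` S" and y: "y \<in> verts Y"
    obtain s where s: "s \<in> S" "x = f s" using x by blast
    obtain t where t: "t \<in> verts X" "y = f t" using y f(1) unfolding bij_betw_def by blast
    have "s \<in> verts X" using s S(3) unfolding isol_def by blast
    then show "\<not> adj Y x y" using f(2) s t S(3) unfolding isol_def by blast
  qed
  ultimately show ?thesis using S(1) unfolding has_isol_def by blast
qed

lemma disconnected_sibling:
  fixes G H :: "'a graph"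
  assumes gG: "is_graph G" and cG: "connected_graph G" and inf: "infinite (verts G)"
    and gH: "is_graph H" and eq: "equimorphic H G" and nc: "\<not> connected_graph H"
  shows "fam G"
proof -
  have e1: "embeds G H" and e2: "embeds H G" using eq unfolding equimorphic_def by simp_all
  obtain \<psi> where psi: "inj_on \<psi> (verts G)" "\<psi> ` verts G \<subseteq> verts H"
    "\<forall>x\<in>verts G. \<forall>y\<in>verts G. adj G x y \<longleftrightarrow> adj H (\<psi> x) (\<psi> y)"
    using e1 unfolding embeds_def by blast
  obtain \<chi> where chi: "inj_on \<chi> (verts H)" "\<chi> ` verts H \<subseteq> verts G"
    "\<forall>x\<in>verts H. \<forall>y\<in>verts H. adj H x y \<longleftrightarrow> adj G (\<chi> x) (\<chi> y)"
    using e2 unfolding embeds_def by blast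
  define \<phi> where "\<phi> = \<psi> \<circ> \<chi>"
  define D where "D = \<psi> ` verts G"
  have DH: "D \<subseteq> verts H" using psi(2) D_def by simp
  have phiD: "\<phi> x \<in> D" if "x \<in> verts H" for x using that chi(2) unfolding \<phi>_def D_def by auto
  have phiH: "\<phi> x \<in> verts H" if "x \<in> verts H" for x using phiD DH that by blast
  have phiinj: "\<phi> x = \<phi> y \<Longrightarrow> x \<in> verts H \<Longrightarrow> y \<in> verts H \<Longrightarrow> x = y" for x y
  proof -
    assume a: "\<phi> x = \<phi> y" "x \<in> verts H" "y \<in> verts H"
    have "\<chi> x \<in> verts G" "\<chi> y \<in> verts G" using a chi(2) by auto
    then have "\<chi> x = \<chi> y" using a(1) psi(1) unfolding \<phi>_def by (simp add: inj_on_eq_iff)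
    then show "x = y" using a chi(1) by (simp add: inj_on_eq_iff)
  qed
  have phiadj: "adj H (\<phi> x) (\<phi> y) \<longleftrightarrow> adj H x y" if "x \<in> verts H" "y \<in> verts H" for x y
    using that chi psi unfolding \<phi>_def by (auto simp: image_subset_iff)
  have L1: "(\<phi> ^^ j) x \<in> verts H" if "x \<in> verts H" for j x
    using that by (induction j) (auto intro: phiH)
  have L2: "(\<phi> ^^ j) x \<in> D" if a2: "x \<in> verts H" "j \<ge> 1" for j x
  proof -
    obtain i where "j = Suc i" using a2(2) by (cases j) auto
    then show ?thesis using L1[OF a2(1)] phiD by simp
  qed
  have L3: "(\<phi> ^^ j) x = (\<phi> ^^ j) y \<Longrightarrow> x \<in> verts H \<Longrightarrow> y \<in> verts H \<Longrightarrow> x = y" for j x y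
    by (induction j) (auto dest: phiinj simp: L1)
  have L4: "adj H ((\<phi> ^^ j) x) ((\<phi> ^^ j) y) \<longleftrightarrow> adj H x y" if "x \<in> verts H" "y \<in> verts H" for j x y
    using that by (induction j) (auto simp: phiadj L1)
  have L5: "(\<phi> ^^ (i + j)) x = (\<phi> ^^ i) ((\<phi> ^^ j) x)" for i j x
    by (simp add: funpow_add)
  have reach: "(adj H)\<^sup>*\<^sup>* (\<psi> a) (\<psi> b)" if "a \<in> verts G" "(adj G)\<^sup>*\<^sup>* a b" for a b
    using that(2)
  proof (induction rule: rtranclp_induct)
    case base then show ?case by simp
  next
    case (step y z)
    then have "y \<in> verts G" "z \<in> verts G" using graph_adjD[OF gG] by auto
    then have "adj H (\<psi> y) (\<psi> z)" using psi(3) step by blast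
    then show ?case using step by (meson rtranclp.rtrancl_into_rtrancl)
  qed
  obtain g0 where g0: "g0 \<in> verts G" using inf by (metis ex_in_conv finite.emptyI)
  have Hne: "verts H \<noteq> {}" using g0 psi(2) by blast
  obtain x y where xy: "x \<in> verts H" "y \<in> verts H" "\<not> (adj H)\<^sup>*\<^sup>* x y"
    using nc Hne unfolding connected_graph_def by blast
  obtain v where v: "v \<in> verts H" "\<not> (adj H)\<^sup>*\<^sup>* (\<psi> g0) v"
    using xy graph_rtranclp_sym[OF gH] by (meson rtranclp_trans)
  have Dreach: "(adj H)\<^sup>*\<^sup>* (\<psi> g0) d" if "d \<in> D" for d
    using that g0 reach cG unfolding D_def connected_graph_def by blast
  have vD: "v \<notin> D" using v Dreach by blast
  have vnadj: "\<not> adj H v d" if "d \<in> D" for d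
  proof
    assume "adj H v d"
    then have "adj H d v" using graph_adjD[OF gH] by blast
    then show False using Dreach[OF that] v(2) by (meson rtranclp.rtrancl_into_rtrancl)
  qed
  have N0: "\<not> adj H ((\<phi> ^^ i) v) ((\<phi> ^^ i) e)" if "e \<in> D" for i e
    using L4 v(1) DH that vnadj by blast
  have N1: "\<not> adj H ((\<phi> ^^ j) v) ((\<phi> ^^ k) d)" if "j < k" "d \<in> verts H" for j k d
  proof -
    have "(\<phi> ^^ k) d = (\<phi> ^^ j) ((\<phi> ^^ (k - j)) d)" using L5[of j "k - j"] that by simp
    moreover have "(\<phi> ^^ (k - j)) d \<in> D" using L2 that by simp
    ultimately show ?thesis using N0 by simp
  qed
  have vinj: "inj (\<lambda>j. (\<phi> ^^ j) v)"
  proof -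
    have "(\<phi> ^^ i) v \<noteq> (\<phi> ^^ j) v" if "i < j" for i j
    proof
      assume "(\<phi> ^^ i) v = (\<phi> ^^ j) v"
      also have "\<dots> = (\<phi> ^^ i) ((\<phi> ^^ (j - i)) v)" using L5[of i "j - i"] that by simp
      finally have "v = (\<phi> ^^ (j - i)) v" using L3 L1 v(1) by blast
      moreover have "(\<phi> ^^ (j - i)) v \<in> D" using L2 v(1) that by simp
      ultimately show False using vD by simp
    qed
    then show ?thesis unfolding inj_def by (metis linorder_neqE_nat)
  qed
  have nb: "\<exists>z. adj G g z" if "g \<in> verts G" for g
  proof -
    have "infinite (verts G - {g})" using inf by simp
    then obtain g' where "g' \<in> verts G - {g}" by (metis ex_in_conv finite.emptyI)
    then have "(adj G)\<^sup>*\<^sup>* g g'" "g' \<noteq> g" using cG that unfolding connected_graph_def by auto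
    then show ?thesis by (metis converse_rtranclpE)
  qed
  define V where "V = (\<lambda>k. (\<phi> ^^ k) ` D \<union> (\<lambda>j. (\<phi> ^^ j) v) ` {..<k})"
  define X where "X = (\<lambda>k. (V k, \<lambda>x y. x \<in> V k \<and> y \<in> V k \<and> adj H x y))"
  have VH: "V k \<subseteq> verts H" for k using L1 DH v(1) unfolding V_def by auto
  have Xgraph: "is_graph (X k)" for k
    using gH unfolding X_def is_graph_def by auto
  have Xequi: "equimorphic (X k) G" for k
  proof -
    have "embeds (X k) G"
      unfolding embeds_def
    proof (intro exI[of _ \<chi>] conjI)
      show "inj_on \<chi> (verts (X k))" using chi(1) VH unfolding X_def by (auto intro: inj_on_subset)
      show "\<chi> ` verts (X k) \<subseteq> verts G" using chi(2) VH unfolding X_def by auto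
      show "\<forall>x\<in>verts (X k). \<forall>y\<in>verts (X k). adj (X k) x y = adj G (\<chi> x) (\<chi> y)"
        using chi(3) VH unfolding X_def by auto
    qed
    moreover have "embeds G (X k)"
      unfolding embeds_def
    proof (intro exI[of _ "(\<phi> ^^ k) \<circ> \<psi>"] conjI)
      show "inj_on ((\<phi> ^^ k) \<circ> \<psi>) (verts G)"
        using psi(1,2) L3 unfolding inj_on_def by (auto simp: image_subset_iff)
      show "((\<phi> ^^ k) \<circ> \<psi>) ` verts G \<subseteq> verts (X k)"
        unfolding X_def V_def D_def by auto
      show "\<forall>x\<in>verts G. \<forall>y\<in>verts G. adj G x y = adj (X k) (((\<phi> ^^ k) \<circ> \<psi>) x) (((\<phi> ^^ k) \<circ> \<psi>) y)"
        using psi L4 unfolding X_def V_def D_def by (auto simp: image_subset_iff)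
    qed
    ultimately show ?thesis unfolding equimorphic_def by blast
  qed
  have isolk: "has_isol (X k) k" for k
  proof -
    let ?S = "(\<lambda>j. (\<phi> ^^ j) v) ` {..<k}"
    have "card ?S = k" using vinj by (simp add: card_image inj_on_subset)
    moreover have "isol (X k) ?S"
      unfolding isol_def
    proof (intro conjI ballI)
      show "?S \<subseteq> verts (X k)" unfolding X_def V_def by auto
    next
      fix x y assume x: "x \<in> ?S" and y: "y \<in> verts (X k)"
      obtain j where j: "j < k" "x = (\<phi> ^^ j) v" using x by auto
      have "\<not> adj H x y"
      proof (cases "y \<in> (\<phi> ^^ k) ` D")
        case True
        then obtain d where "d \<in> D" "y = (\<phi> ^^ k) d" by blast
        then show ?thesis using N1[OF j(1)] DH j(2) by blast
      next
        case False
        then obtain i where i: "y = (\<phi> ^^ i) v" using y unfolding X_def V_def by auto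
        consider "i < j" | "i = j" | "j < i" by linarith
        then show ?thesis
        proof cases
          case 1 then show ?thesis using N1[OF 1 v(1)] i j graph_adjD(3)[OF gH] by blast
        next
          case 2 then show ?thesis using i j graph_adjD(4)[OF gH] by blast
        next
          case 3 then show ?thesis using N1[OF 3 v(1)] i j by blast
        qed
      qed
      then show "\<not> adj (X k) x y" unfolding X_def by simp
    qed
    ultimately show ?thesis unfolding has_isol_def by blast
  qed
  have isol_bound: "m \<le> k" if hk: "has_isol (X k) m" for k m
  proof -
    obtain S where S: "finite S" "card S = m" "isol (X k) S" using hk unfolding has_isol_def by blast
    have "S \<subseteq> (\<lambda>j. (\<phi> ^^ j) v) ` {..<k}"
    proof
      fix s assume s: "s \<in> S"
      show "s \<in> (\<lambda>j. (\<phi> ^^ j) v) ` {..<k}"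
      proof (rule ccontr)
        assume "s \<notin> (\<lambda>j. (\<phi> ^^ j) v) ` {..<k}"
        moreover have "s \<in> V k" using s S(3) unfolding isol_def X_def by auto
        ultimately obtain g where g: "g \<in> verts G" "s = (\<phi> ^^ k) (\<psi> g)"
          unfolding V_def D_def by auto
        obtain z where z: "adj G g z" using nb g(1) by blast
        have zG: "z \<in> verts G" using graph_adjD[OF gG z] by blast
        have "adj H (\<psi> g) (\<psi> z)" using psi(3) z zG g(1) by blast
        then have "adj H s ((\<phi> ^^ k) (\<psi> z))" using L4 g psi(2) zG by (auto simp: image_subset_iff)
        moreover have "(\<phi> ^^ k) (\<psi> z) \<in> V k" using zG unfolding V_def D_def by auto
        ultimately have "adj (X k) s ((\<phi> ^^ k) (\<psi> z))" using \<open>s \<in> V k\<close> unfolding X_def by simp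
        moreover have "(\<phi> ^^ k) (\<psi> z) \<in> verts (X k)" using \<open>(\<phi> ^^ k) (\<psi> z) \<in> V k\<close> unfolding X_def by simp
        ultimately show False using S(3) s unfolding isol_def by blast
      qed
    qed
    then have "card S \<le> card ((\<lambda>j. (\<phi> ^^ j) v) ` {..<k})" by (simp add: card_mono)
    also have "\<dots> \<le> k" using card_image_le[of "{..<k}"] by simp
    finally show ?thesis using S(2) by simp
  qed
  have lt: "\<not> isomorphic (X k) (X m)" if "k < m" for k m
  proof
    assume "isomorphic (X k) (X m)"
    then have "has_isol (X k) m" using iso_has_isol[OF iso_sym isolk] by blast
    then show False using isol_bound that by fastforce
  qed
  have "\<not> isomorphic (X n) (X m)" if "n \<noteq> m" for n m
    using that lt iso_sym by (metis linorder_neqE_nat)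
  then show ?thesis unfolding fam_def using Xgraph Xequi by blast
qed



lemma conn_case:
  fixes G :: "'a graph"
  assumes hyp: "\<And>K :: 'a graph. is_graph K \<Longrightarrow> connected_graph K \<Longrightarrow>
      one_or_infinite (iso_classes (\<lambda>H :: 'a graph. connected_graph H \<and> equimorphic H K))"
    and gG: "is_graph G" and cG: "connected_graph G" and inf: "infinite (verts G)"
  shows "all_iso G \<or> fam G"
proof (cases "\<exists>H :: 'a graph. is_graph H \<and> equimorphic H G \<and> \<not> connected_graph H")
  case True
  then obtain H :: "'a graph" where "is_graph H" "equimorphic H G" "\<not> connected_graph H" by blast
  then have "fam G" using disconnected_sibling[OF gG cG inf] by blast
  then show ?thesis by simp
next
  case False
  have oi: "one_or_infinite (iso_classes (\<lambda>H :: 'a graph. connected_graph H \<and> equimorphic H G))"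
    by (rule hyp[OF gG cG])
  have cGG: "connected_graph G \<and> equimorphic G G" using cG equi_refl by blast
  show ?thesis
  proof (cases "card (iso_classes (\<lambda>H :: 'a graph. connected_graph H \<and> equimorphic H G)) = 1")
    case True
    have "isomorphic G H" if "is_graph H" "equimorphic H G" for H :: "'a graph"
    proof -
      have "connected_graph H" using False that by blast
      then show ?thesis using classes_one[OF True gG cGG that(1)] that(2) by blast
    qed
    then have "all_iso G" unfolding all_iso_def by blast
    then show ?thesis by simp
  next
    case False
    then have "infinite (iso_classes (\<lambda>H :: 'a graph. connected_graph H \<and> equimorphic H G))"
      using oi unfolding one_or_infinite_def by blast
    then obtain X :: "nat \<Rightarrow> 'a graph" where X: "\<forall>n. is_graph (X n) \<and> connected_graph (X n) \<and> equimorphic (X n) G"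
      "\<forall>n m. n \<noteq> m \<longrightarrow> \<not> isomorphic (X n) (X m)"
      using classes_inf_fam by blast
    have "fam G" unfolding fam_def
      by (rule exI[of _ X]) (use X in blast)
    then show ?thesis by simp
  qed
qed

theorem proposition1p5:
  fixes G :: "'a graph"
  assumes hyp: "\<And>K :: 'a graph. is_graph K \<Longrightarrow> connected_graph K \<Longrightarrow>
      one_or_infinite (iso_classes (\<lambda>H :: 'a graph. connected_graph H \<and> equimorphic H K))"
    and "is_graph G"
  shows "one_or_infinite (iso_classes (\<lambda>H :: 'a graph. equimorphic H G))"
proof -
  have "all_iso G \<or> fam G"
  proof (cases "finite (verts G)")
    case True
    then show ?thesis using finite_case[OF assms(2)] by simp
  next
    case inf: False
    show ?thesis
    proof (cases "connected_graph G")
      case True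
      then show ?thesis using conn_case[OF hyp assms(2) True inf] by simp
    next
      case False
      have ne: "verts G \<noteq> {}" using inf by auto
      have "connected_graph (compl G)" using connected_compl[OF assms(2) ne False] .
      moreover have "is_graph (compl G)" using assms(2) by (rule is_graph_compl)
      moreover have "infinite (verts (compl G))" using inf by simp
      ultimately have "all_iso (compl G) \<or> fam (compl G)" using conn_case[OF hyp] by blast
      then show ?thesis using transfer_compl[OF assms(2)] by blast
    qed
  qed
  then show ?thesis using final_all[OF assms(2)] final_fam by blast
qed

end
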